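(* Let $G$ be a finite group and $S\subseteq G\setminus\{e\}$ such that $\mathrm{Cay}(G,S)$ is a weakly distance-regular digraph, and let $\mathcal{D}(G,S)$ be its two-way distance module. Then $\mathcal{D}(G,S)$ is a primitive S-ring if and only if $\mathrm{Cay}(G,S)$ is primitive.
   Context: $\mathrm{Cay}(G,S)$ has vertex set $G$ and arcs $(x,y)$ with $yx^{-1}\in S$. For a digraph $\Gamma$, $\tilde\partial(x,y)=(\partial(x,y),\partial(y,x))$ with $\partial$ the directed distance, $\Gamma_{\tilde i}=\{(x,y):\tilde\partial(x,y)=\tilde i\}$; a strongly connected $\Gamma$ is weakly distance-regular if $(V\Gamma,\{\Gamma_{\tilde i}\})$ is an association scheme. In an association scheme, for relations $R_i,R_j$ let $R_iR_j$ be the set of relations $R_l$ with nonzero intersection number $p_{i,j}^l$; a set $F$ of relations is closed if $R_i^{\mathrm T}R_j\subseteq F$ for all $R_i,R_j\in F$; the scheme is primitive if the smallest closed set containing any non-diagonal relation is the set of all relations; $\Gamma$ is primitive if its scheme is. For $X\subseteq G$, $\underline{X}$ denotes $\sum_{x\in X}x\in\mathbb{Z}[G]$. A subring $\mathcal A\subseteq\mathbb{Z}[G]$ is an S-ring over $G$ if there is a partition $\mathcal S$ of $G$ with $\{e\}\in\mathcal S$, $X^{(-1)}=\{x^{-1}:x\in X\}\in\mathcal S$ for all $X\in\mathcal S$, and $\{\underline X:X\in\mathcal S\}$ a $\mathbb{Z}$-basis of $\mathcal A$; a subgroup $H$ of $G$ is an $\mathcal A$-subgroup if $\underline H\in\mathcal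 A$; $\mathcal A$ is primitive if it has no $\mathcal A$-subgroup other than $\{e\}$ and $G$. With $\Gamma=\mathrm{Cay}(G,S)$ and $N_{\tilde i}=\{y:\tilde\partial(e,y)=\tilde i\}$, the two-way distance module $\mathcal{D}(G,S)$ is the $\mathbb{Z}$-submodule of $\mathbb{Z}[G]$ spanned by the elements $\underline{N_{\tilde i}}$, $\tilde i$ ranging over all two-way distances of $\Gamma$. *)

theory Defs
  imports "HOL-Algebra.Group"
begin

definition strongly_connected :: "'a set \<Rightarrow> ('a \<times> 'a) set \<Rightarrow> bool" where
  "strongly_connected V E \<longleftrightarrow> (\<forall>x\<in>V. \<forall>y\<in>V. \<exists>n. (x, y) \<in> E ^^ n)"

text \<open>Directed distance (meaningful for strongly connected digraphs).\<close>
definition ddist :: "('a \<times> 'a) set \<Rightarrow> 'a \<Rightarrow> 'a \<Rightarrow> nat" where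
  "ddist E x y = (LEAST n. (x, y) \<in> E ^^ n)"

definition twoway_dist :: "('a \<times> 'a) set \<Rightarrow> 'a \<Rightarrow> 'a \<Rightarrow> nat \<times> nat" where
  "twoway_dist E x y = (ddist E x y, ddist E y x)"

definition twoway_dists :: "'a set \<Rightarrow> ('a \<times> 'a) set \<Rightarrow> (nat \<times> nat) set" where
  "twoway_dists V E = (\<lambda>(x, y). twoway_dist E x y) ` (V \<times> V)"

definition dist_rel :: "'a set \<Rightarrow> ('a \<times> 'a) set \<Rightarrow> nat \<times> nat \<Rightarrow> ('a \<times> 'a) set" where
  "dist_rel V E i = {(x, y). x \<in> V \<and> y \<in> V \<and> twoway_dist E x y = i}"

definition dist_rels :: "'a set \<Rightarrow> ('a \<times> 'a) set \<Rightarrow> ('a \<times> 'a) set set" where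
  "dist_rels V E = dist_rel V E ` twoway_dists V E"

definition inter_num :: "'a set \<Rightarrow> ('a \<times> 'a) set \<Rightarrow> ('a \<times> 'a) set \<Rightarrow> 'a \<Rightarrow> 'a \<Rightarrow> nat" where
  "inter_num V Ri Rj x y = card {z \<in> V. (x, z) \<in> Ri \<and> (z, y) \<in> Rj}"

definition assoc_scheme :: "'a set \<Rightarrow> ('a \<times> 'a) set set \<Rightarrow> bool" where
  "assoc_scheme V Rs \<longleftrightarrow>
     finite V \<and>
     (\<forall>R\<in>Rs. R \<noteq> {} \<and> R \<subseteq> V \<times> V) \<and>
     (\<forall>R\<in>Rs. \<forall>R'\<in>Rs. R \<noteq> R' \<longrightarrow> R \<inter> R' = {}) \<and>
     \<Union>Rs = V \<times> V \<and>
     Id_on V \<in> Rs \<and>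
     (\<forall>R\<in>Rs. converse R \<in> Rs) \<and>
     (\<forall>Ri\<in>Rs. \<forall>Rj\<in>Rs. \<forall>Rl\<in>Rs. \<forall>(x, y)\<in>Rl. \<forall>(x', y')\<in>Rl.
        inter_num V Ri Rj x y = inter_num V Ri Rj x' y')"

definition rel_prod :: "'a set \<Rightarrow> ('a \<times> 'a) set set \<Rightarrow> ('a \<times> 'a) set \<Rightarrow> ('a \<times> 'a) set \<Rightarrow> ('a \<times> 'a) set set" where
  "rel_prod V Rs Ri Rj = {Rl \<in> Rs. \<exists>(x, y)\<in>Rl. inter_num V Ri Rj x y \<noteq> 0}"

definition closed_set :: "'a set \<Rightarrow> ('a \<times> 'a) set set \<Rightarrow> ('a \<times> 'a) set set \<Rightarrow> bool" where
  "closed_set V Rs F \<longleftrightarrow> (\<forall>Ri\<in>F. \<forall>Rj\<in>F. rel_prod V Rs (converse Ri) Rj \<subseteq> F)"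

definition closed_hull :: "'a set \<Rightarrow> ('a \<times> 'a) set set \<Rightarrow> ('a \<times> 'a) set \<Rightarrow> ('a \<times> 'a) set set" where
  "closed_hull V Rs R = \<Inter>{F. F \<subseteq> Rs \<and> closed_set V Rs F \<and> R \<in> F}"

definition primitive_scheme :: "'a set \<Rightarrow> ('a \<times> 'a) set set \<Rightarrow> bool" where
  "primitive_scheme V Rs \<longleftrightarrow> (\<forall>R\<in>Rs. R \<noteq> Id_on V \<longrightarrow> closed_hull V Rs R = Rs)"

definition weakly_distance_regular :: "'a set \<Rightarrow> ('a \<times> 'a) set \<Rightarrow> bool" where
  "weakly_distance_regular V E \<longleftrightarrow>
     strongly_connected V E \<and> assoc_scheme V (dist_rels V E)"

definition primitive_digraph :: "'a set \<Rightarrow> ('a \<times> 'a) set \<Rightarrow> bool" where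
  "primitive_digraph V E \<longleftrightarrow> primitive_scheme V (dist_rels V E)"

definition cay_arcs :: "('a, 'b) monoid_scheme \<Rightarrow> 'a set \<Rightarrow> ('a \<times> 'a) set" where
  "cay_arcs G S = {(x, y). x \<in> carrier G \<and> y \<in> carrier G \<and> y \<otimes>\<^bsub>G\<^esub> inv\<^bsub>G\<^esub> x \<in> S}"

section \<open>The group ring Z[G] (G finite): functions carrier G -> int, zero outside\<close>

definition zind :: "('a, 'b) monoid_scheme \<Rightarrow> 'a set \<Rightarrow> 'a \<Rightarrow> int" where
  "zind G X = (\<lambda>g. if g \<in> carrier G \<and> g \<in> X then 1 else 0)"

definition zmult :: "('a, 'b) monoid_scheme \<Rightarrow> ('a \<Rightarrow> int) \<Rightarrow> ('a \<Rightarrow> int) \<Rightarrow> 'a \<Rightarrow> int" where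
  "zmult G f h = (\<lambda>g. if g \<in> carrier G
       then (\<Sum>x\<in>carrier G. f x * h (inv\<^bsub>G\<^esub> x \<otimes>\<^bsub>G\<^esub> g)) else 0)"

definition zgroupring :: "('a, 'b) monoid_scheme \<Rightarrow> ('a \<Rightarrow> int) set" where
  "zgroupring G = {f. \<forall>g. g \<notin> carrier G \<longrightarrow> f g = 0}"

definition zspan :: "('a \<Rightarrow> int) set \<Rightarrow> ('a \<Rightarrow> int) set" where
  "zspan B = {f. \<exists>c. f = (\<lambda>g. \<Sum>b\<in>B. c b * b g)}"

definition zindependent :: "('a \<Rightarrow> int) set \<Rightarrow> bool" where
  "zindependent B \<longleftrightarrow> (\<forall>c. (\<forall>g. (\<Sum>b\<in>B. c b * b g) = 0) \<longrightarrow> (\<forall>b\<in>B. c b = 0))"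

definition zsubring :: "('a, 'b) monoid_scheme \<Rightarrow> ('a \<Rightarrow> int) set \<Rightarrow> bool" where
  "zsubring G A \<longleftrightarrow> A \<subseteq> zgroupring G \<and>
     zind G {\<one>\<^bsub>G\<^esub>} \<in> A \<and> (\<lambda>g. 0) \<in> A \<and>
     (\<forall>f\<in>A. \<forall>h\<in>A. (\<lambda>g. f g + h g) \<in> A \<and> (\<lambda>g. - f g) \<in> A \<and> zmult G f h \<in> A)"

definition is_Sring :: "('a, 'b) monoid_scheme \<Rightarrow> ('a \<Rightarrow> int) set \<Rightarrow> bool" where
  "is_Sring G A \<longleftrightarrow> zsubring G A \<and>
     (\<exists>P. (\<forall>X\<in>P. X \<noteq> {}) \<and> (\<forall>X\<in>P. \<forall>Y\<in>P. X \<noteq> Y \<longrightarrow> X \<inter> Y = {}) \<and>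
          \<Union>P = carrier G \<and>
          {\<one>\<^bsub>G\<^esub>} \<in> P \<and>
          (\<forall>X\<in>P. (\<lambda>x. inv\<^bsub>G\<^esub> x) ` X \<in> P) \<and>
          A = zspan (zind G ` P) \<and> zindependent (zind G ` P))"

definition Sring_subgroup :: "('a, 'b) monoid_scheme \<Rightarrow> ('a \<Rightarrow> int) set \<Rightarrow> 'a set \<Rightarrow> bool" where
  "Sring_subgroup G A H \<longleftrightarrow> subgroup H G \<and> zind G H \<in> A"

definition primitive_Sring :: "('a, 'b) monoid_scheme \<Rightarrow> ('a \<Rightarrow> int) set \<Rightarrow> bool" where
  "primitive_Sring G A \<longleftrightarrow> is_Sring G A \<and>
     (\<forall>H. Sring_subgroup G A H \<longrightarrow> H = {\<one>\<^bsub>G\<^esub>} \<or> H = carrier G)"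

definition N_set :: "('a, 'b) monoid_scheme \<Rightarrow> 'a set \<Rightarrow> nat \<times> nat \<Rightarrow> 'a set" where
  "N_set G S i = {y \<in> carrier G. twoway_dist (cay_arcs G S) \<one>\<^bsub>G\<^esub> y = i}"

definition twoway_module :: "('a, 'b) monoid_scheme \<Rightarrow> 'a set \<Rightarrow> ('a \<Rightarrow> int) set" where
  "twoway_module G S = zspan ((\<lambda>i. zind G (N_set G S i)) ` twoway_dists (carrier G) (cay_arcs G S))"

end

theory Submission imports Defs begin

locale wc = group G for G :: "('a,'b) monoid_scheme" (structure) +
  fixes S :: "'a set"
  assumes fin: "finite (carrier G)"
    and wdr: "weakly_distance_regular (carrier G) (cay_arcs G S)"
begin

abbreviation "EE \<equiv> cay_arcs G S"
abbreviation "td \<equiv> twoway_dist EE"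
abbreviation "TT \<equiv> twoway_dists (carrier G) EE"
abbreviation "Rs \<equiv> dist_rels (carrier G) EE"
abbreviation "NN \<equiv> N_set G S"

definition cf :: "(nat \<times> nat \<Rightarrow> int) \<Rightarrow> 'a \<Rightarrow> int" where
  "cf F = (\<lambda>g. if g \<in> carrier G then F (td \<one> g) else 0)"

lemma pow_shift:
  "x \<in> carrier G \<Longrightarrow> y \<in> carrier G \<Longrightarrow> a \<in> carrier G \<Longrightarrow> (x,y) \<in> EE^^n
   \<Longrightarrow> (x \<otimes> a, y \<otimes> a) \<in> EE^^n"
proof (induction n arbitrary: y)
  case 0 thus ?case by simp
next
  case (Suc n)
  from Suc.prems(4) obtain z where xz: "(x,z) \<in> EE^^n" and zy: "(z,y) \<in> EE" by auto
  have zV: "z \<in> carrier G" using zy by (simp add: cay_arcs_def)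
  have 1: "(x \<otimes> a, z \<otimes> a) \<in> EE^^n" using Suc.IH[OF Suc.prems(1) zV Suc.prems(3) xz] .
  have aa: "a \<otimes> (inv a \<otimes> inv z) = inv z" using Suc.prems zV by (simp add: m_assoc[symmetric])
  have "(y \<otimes> a) \<otimes> inv (z \<otimes> a) = y \<otimes> inv z" using Suc.prems zV
    by (simp add: inv_mult_group m_assoc aa)
  hence "(z \<otimes> a, y \<otimes> a) \<in> EE" using zy zV Suc.prems by (simp add: cay_arcs_def)
  thus ?case using 1 by auto
qed

lemma pow_iff:
  "x \<in> carrier G \<Longrightarrow> y \<in> carrier G \<Longrightarrow> a \<in> carrier G \<Longrightarrow>
   (x \<otimes> a, y \<otimes> a) \<in> EE^^n \<longleftrightarrow> (x,y) \<in> EE^^n"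
  using pow_shift[of "x \<otimes> a" "y \<otimes> a" "inv a" n] pow_shift[of x y a n]
  by (auto simp: m_assoc)

lemma td_shift:
  "x \<in> carrier G \<Longrightarrow> y \<in> carrier G \<Longrightarrow> a \<in> carrier G \<Longrightarrow>
   td (x \<otimes> a) (y \<otimes> a) = td x y"
  by (simp add: twoway_dist_def ddist_def pow_iff)

lemma td_base: "x \<in> carrier G \<Longrightarrow> y \<in> carrier G \<Longrightarrow> td x y = td \<one> (y \<otimes> inv x)"
  using td_shift[of x y "inv x"] by simp

lemma td_inv: "y \<in> carrier G \<Longrightarrow> td \<one> (inv y) = prod.swap (td \<one> y)"
proof -
  assume y: "y \<in> carrier G"
  have "td \<one> (inv y) = td y \<one>" using td_base[of y \<one>] y by simp
  thus ?thesis by (simp add: twoway_dist_def)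
qed

lemma sc: "x \<in> carrier G \<Longrightarrow> y \<in> carrier G \<Longrightarrow> \<exists>n. (x,y) \<in> EE^^n"
  using wdr by (auto simp: weakly_distance_regular_def strongly_connected_def)

lemma td_zero: "x \<in> carrier G \<Longrightarrow> y \<in> carrier G \<Longrightarrow> fst (td x y) = 0 \<Longrightarrow> x = y"
proof -
  assume x: "x \<in> carrier G" and y: "y \<in> carrier G" and z: "fst (td x y) = 0"
  obtain n where "(x,y) \<in> EE^^n" using sc[OF x y] by blast
  hence "(x,y) \<in> EE^^(LEAST n. (x,y) \<in> EE^^n)" by (rule LeastI)
  with z show "x = y" by (simp add: twoway_dist_def ddist_def)
qed

lemma td_refl: "td x x = (0,0)"
  by (simp add: twoway_dist_def ddist_def)

lemma td_T: "x \<in> carrier G \<Longrightarrow> y \<in> carrier G \<Longrightarrow> td x y \<in> TT"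
  unfolding twoway_dists_def by (rule image_eqI[where x="(x,y)"]) auto

lemma T_iff: "k \<in> TT \<longleftrightarrow> (\<exists>g\<in>carrier G. td \<one> g = k)"
proof
  assume "k \<in> TT"
  then obtain x y where "x \<in> carrier G" "y \<in> carrier G" "k = td x y"
    by (auto simp: twoway_dists_def)
  thus "\<exists>g\<in>carrier G. td \<one> g = k" using td_base[of x y] by auto
next
  assume "\<exists>g\<in>carrier G. td \<one> g = k"
  thus "k \<in> TT" using td_T by blast
qed

lemma finT: "finite TT"
  using fin by (simp add: twoway_dists_def)

lemma N_mem: "g \<in> NN k \<longleftrightarrow> g \<in> carrier G \<and> td \<one> g = k"
  by (simp add: N_set_def)

lemma zindN: "g \<in> carrier G \<Longrightarrow> zind G (NN k) g = (if td \<one> g = k then 1 else 0)"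
  by (simp add: zind_def N_mem)

lemma zindN_out: "g \<notin> carrier G \<Longrightarrow> zind G X g = 0"
  by (simp add: zind_def)

lemma injN: "inj_on (\<lambda>i. zind G (NN i)) TT"
proof (rule inj_onI)
  fix i j assume i: "i \<in> TT" and j: "j \<in> TT" and e: "zind G (NN i) = zind G (NN j)"
  from i obtain g where g: "g \<in> carrier G" "td \<one> g = i" unfolding T_iff by blast
  have "zind G (NN i) g = 1" using zindN[OF g(1), of i] g(2) by simp
  hence "zind G (NN j) g = 1" using e by simp
  hence "td \<one> g = j" using zindN[OF g(1), of j] by (simp split: if_splits)
  thus "i = j" using g(2) by simp
qed

lemma sum_at:
  "(\<Sum>b\<in>(\<lambda>i. zind G (NN i)) ` TT. c b * b g) =
   (if g \<in> carrier G then c (zind G (NN (td \<one> g))) else 0)"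
proof -
  have "(\<Sum>b\<in>(\<lambda>i. zind G (NN i)) ` TT. c b * b g) =
        (\<Sum>i\<in>TT. c (zind G (NN i)) * zind G (NN i) g)"
    by (simp add: sum.reindex[OF injN])
  also have "\<dots> = (if g \<in> carrier G then c (zind G (NN (td \<one> g))) else 0)"
  proof (cases "g \<in> carrier G")
    case True
    hence "(\<Sum>i\<in>TT. c (zind G (NN i)) * zind G (NN i) g) =
           (\<Sum>i\<in>TT. if td \<one> g = i then c (zind G (NN i)) else 0)"
      by (intro sum.cong) (auto simp: zindN)
    also have "\<dots> = c (zind G (NN (td \<one> g)))"
      using True td_T[of \<one> g] by (simp add: sum.delta finT)
    finally show ?thesis using True by simp
  next
    case False thus ?thesis by (simp add: zindN_out)
  qed
  finally show ?thesis .
qed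

lemma A_char: "f \<in> twoway_module G S \<longleftrightarrow> (\<exists>F. f = cf F)"
proof
  assume "f \<in> twoway_module G S"
  then obtain c where "f = (\<lambda>g. \<Sum>b\<in>(\<lambda>i. zind G (NN i)) ` TT. c b * b g)"
    by (auto simp: twoway_module_def zspan_def)
  hence "f = cf (\<lambda>k. c (zind G (NN k)))" by (simp add: sum_at cf_def)
  thus "\<exists>F. f = cf F" by blast
next
  assume "\<exists>F. f = cf F"
  then obtain F where f: "f = cf F" by blast
  define c where "c = (\<lambda>b. F (inv_into TT (\<lambda>i. zind G (NN i)) b))"
  have "f = (\<lambda>g. \<Sum>b\<in>(\<lambda>i. zind G (NN i)) ` TT. c b * b g)"
    by (auto simp: sum_at f cf_def c_def inv_into_f_f[OF injN] td_T)
  thus "f \<in> twoway_module G S" by (auto simp: twoway_module_def zspan_def)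
qed


lemma scheme: "assoc_scheme (carrier G) Rs"
  using wdr by (simp add: weakly_distance_regular_def)

lemma Rs_eq: "Rs = dist_rel (carrier G) EE ` TT"
  by (simp add: dist_rels_def)

lemma dr_mem: "(x,y) \<in> dist_rel (carrier G) EE k \<longleftrightarrow> x \<in> carrier G \<and> y \<in> carrier G \<and> td x y = k"
  by (simp add: dist_rel_def)

lemma inter_const:
  assumes "i \<in> TT" "j \<in> TT" "u \<in> carrier G" "v \<in> carrier G" "u' \<in> carrier G" "v' \<in> carrier G"
    "td u v = td u' v'"
  shows "inter_num (carrier G) (dist_rel (carrier G) EE i) (dist_rel (carrier G) EE j) u v =
         inter_num (carrier G) (dist_rel (carrier G) EE i) (dist_rel (carrier G) EE j) u' v'"
proof -
  have all: "\<forall>Ri\<in>Rs. \<forall>Rj\<in>Rs. \<forall>Rl\<in>Rs. \<forall>(x, y)\<in>Rl. \<forall>(x', y')\<in>Rl.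
        inter_num (carrier G) Ri Rj x y = inter_num (carrier G) Ri Rj x' y'"
    using scheme by (simp add: assoc_scheme_def)
  have ri: "dist_rel (carrier G) EE i \<in> Rs" and rj: "dist_rel (carrier G) EE j \<in> Rs"
    and rl: "dist_rel (carrier G) EE (td u v) \<in> Rs"
    using assms td_T by (auto simp: Rs_eq)
  have m1: "(u,v) \<in> dist_rel (carrier G) EE (td u v)" and m2: "(u',v') \<in> dist_rel (carrier G) EE (td u v)"
    using assms by (auto simp: dr_mem)
  have "\<forall>(x, y)\<in>dist_rel (carrier G) EE (td u v). \<forall>(x', y')\<in>dist_rel (carrier G) EE (td u v).
        inter_num (carrier G) (dist_rel (carrier G) EE i) (dist_rel (carrier G) EE j) x y =
        inter_num (carrier G) (dist_rel (carrier G) EE i) (dist_rel (carrier G) EE j) x' y'"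
    using bspec[OF bspec[OF bspec[OF all ri] rj] rl] .
  note hh = this
  have "\<forall>(x', y')\<in>dist_rel (carrier G) EE (td u v).
        inter_num (carrier G) (dist_rel (carrier G) EE i) (dist_rel (carrier G) EE j) u v =
        inter_num (carrier G) (dist_rel (carrier G) EE i) (dist_rel (carrier G) EE j) x' y'"
    using bspec[OF hh m1] by (simp only: prod.case)
  from bspec[OF this m2] show ?thesis by (simp only: prod.case)
qed

lemma Phi_eq:
  fixes F H :: "nat \<times> nat \<Rightarrow> int"
  assumes u: "u \<in> carrier G" and v: "v \<in> carrier G"
  shows "(\<Sum>w\<in>carrier G. H (td u w) * F (td w v)) =
    (\<Sum>p\<in>TT\<times>TT. H (fst p) * F (snd p) * int (inter_num (carrier G)
        (dist_rel (carrier G) EE (fst p)) (dist_rel (carrier G) EE (snd p)) u v))"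
proof -
  have "(\<Sum>w\<in>carrier G. H (td u w) * F (td w v)) =
    (\<Sum>p\<in>TT\<times>TT. \<Sum>w\<in>{w. w \<in> carrier G \<and> (td u w, td w v) = p}. H (td u w) * F (td w v))"
    by (rule sum.group[symmetric]) (auto simp: fin finT td_T u v)
  also have "\<dots> = (\<Sum>p\<in>TT\<times>TT. H (fst p) * F (snd p) * int (inter_num (carrier G)
        (dist_rel (carrier G) EE (fst p)) (dist_rel (carrier G) EE (snd p)) u v))"
  proof (rule sum.cong[OF refl])
    fix p assume "p \<in> TT \<times> TT"
    define X where "X = {w. w \<in> carrier G \<and> (td u w, td w v) = p}"
    have X: "X = {z \<in> carrier G. (u,z) \<in> dist_rel (carrier G) EE (fst p) \<and> (z,v) \<in> dist_rel (carrier G) EE (snd p)}"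
      using u v by (auto simp: X_def dr_mem)
    have "(\<Sum>w\<in>X. H (td u w) * F (td w v)) = (\<Sum>w\<in>X. H (fst p) * F (snd p))"
      by (rule sum.cong) (auto simp: X_def)
    also have "\<dots> = H (fst p) * F (snd p) * int (card X)" by simp
    finally show "(\<Sum>w\<in>{w. w \<in> carrier G \<and> (td u w, td w v) = p}. H (td u w) * F (td w v)) =
       H (fst p) * F (snd p) * int (inter_num (carrier G)
        (dist_rel (carrier G) EE (fst p)) (dist_rel (carrier G) EE (snd p)) u v)"
      by (simp add: X_def[symmetric] X inter_num_def)
  qed
  finally show ?thesis .
qed

lemma Phi_const:
  fixes F H :: "nat \<times> nat \<Rightarrow> int"
  assumes "u \<in> carrier G" "v \<in> carrier G" "u' \<in> carrier G" "v' \<in> carrier G" "td u v = td u' v'"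
  shows "(\<Sum>w\<in>carrier G. H (td u w) * F (td w v)) = (\<Sum>w\<in>carrier G. H (td u' w) * F (td w v'))"
  unfolding Phi_eq[OF assms(1,2)] Phi_eq[OF assms(3,4)]
  using inter_const[OF _ _ assms] by (intro sum.cong refl) (simp add: mem_Times_iff)

lemma zmult_cf: "\<exists>K. zmult G (cf F) (cf H) = cf K"
proof -
  define Phi where "Phi g = (\<Sum>w\<in>carrier G. H (td (inv g) w) * F (td w \<one>))" for g
  have val: "zmult G (cf F) (cf H) g = Phi g" if g: "g \<in> carrier G" for g
  proof -
    have "zmult G (cf F) (cf H) g = (\<Sum>x\<in>carrier G. F (td \<one> x) * H (td \<one> (inv x \<otimes> g)))"
      using g by (simp add: zmult_def cf_def)
    also have "\<dots> = (\<Sum>w\<in>carrier G. F (td \<one> (inv w)) * H (td \<one> (inv (inv w) \<otimes> g)))"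
      by (rule sum.reindex_bij_witness[of _ "\<lambda>x. inv x" "\<lambda>x. inv x"]) auto
    also have "\<dots> = Phi g"
      unfolding Phi_def
    proof (rule sum.cong[OF refl])
      fix w assume w: "w \<in> carrier G"
      have 1: "td \<one> (inv w) = td w \<one>" using td_base[of w \<one>] w by simp
      have 2: "td \<one> (w \<otimes> g) = td (inv g) w" using td_base[of "inv g" w] w g by simp
      show "F (td \<one> (inv w)) * H (td \<one> (inv (inv w) \<otimes> g)) = H (td (inv g) w) * F (td w \<one>)"
        using 1 2 w by simp
    qed
    finally show ?thesis .
  qed
  have const: "Phi g = Phi g'" if "g \<in> carrier G" "g' \<in> carrier G" "td \<one> g = td \<one> g'" for g g'
  proof -
    have "td (inv g) \<one> = td (inv g') \<one>"
      using that td_base[of "inv g" \<one>] td_base[of "inv g'" \<one>] by simp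
    thus ?thesis unfolding Phi_def using that by (intro Phi_const) auto
  qed
  define K where "K k = Phi (SOME g. g \<in> carrier G \<and> td \<one> g = k)" for k
  have "zmult G (cf F) (cf H) = cf K"
  proof
    fix g show "zmult G (cf F) (cf H) g = cf K g"
    proof (cases "g \<in> carrier G")
      case True
      have ex: "\<exists>g'. g' \<in> carrier G \<and> td \<one> g' = td \<one> g" using True by blast
      have s: "(SOME g'. g' \<in> carrier G \<and> td \<one> g' = td \<one> g) \<in> carrier G \<and>
          td \<one> (SOME g'. g' \<in> carrier G \<and> td \<one> g' = td \<one> g) = td \<one> g"
        by (rule someI_ex[OF ex])
      show ?thesis using True val const[OF _ True, OF conjunct1[OF s] conjunct2[OF s]]
        by (simp add: cf_def K_def)
    next
      case False thus ?thesis by (simp add: zmult_def cf_def)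
    qed
  qed
  thus ?thesis by blast
qed

lemma N00: "NN (0,0) = {\<one>}"
proof -
  have "x = \<one>" if "x \<in> NN (0,0)" for x using td_zero[of \<one> x] that by (auto simp: N_mem)
  thus ?thesis using td_refl by (auto simp: N_mem)
qed

lemma T00: "(0,0) \<in> TT"
  using T_iff td_refl by blast

lemma inv_N: "k \<in> TT \<Longrightarrow> (\<lambda>x. inv x) ` NN k = NN (prod.swap k)"
proof
  show "(\<lambda>x. inv x) ` NN k \<subseteq> NN (prod.swap k)" by (auto simp: N_mem td_inv)
  show "NN (prod.swap k) \<subseteq> (\<lambda>x. inv x) ` NN k"
  proof
    fix z assume z: "z \<in> NN (prod.swap k)"
    hence "inv z \<in> NN k" by (auto simp: N_mem td_inv)
    moreover have "z = inv (inv z)" using z by (simp add: N_mem)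
    ultimately show "z \<in> (\<lambda>x. inv x) ` NN k" by blast
  qed
qed

lemma swap_T: "k \<in> TT \<Longrightarrow> prod.swap k \<in> TT"
  using T_iff td_inv by (metis inv_closed swap_swap)

lemma is_sring: "is_Sring G (twoway_module G S)"
proof -
  have zs: "zsubring G (twoway_module G S)"
    unfolding zsubring_def
  proof (intro conjI ballI)
    show "twoway_module G S \<subseteq> zgroupring G"
      by (auto simp: A_char cf_def zgroupring_def)
    have e1: "td \<one> g = (0,0) \<longleftrightarrow> g = \<one>" if "g \<in> carrier G" for g
      using td_zero[of \<one> g] td_refl that by auto
    have "zind G {\<one>} = cf (\<lambda>k. if k = (0,0) then 1 else 0)"
    proof
      fix g show "zind G {\<one>} g = cf (\<lambda>k. if k = (0,0) then 1 else 0) g"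
        using e1[of g] by (cases "g \<in> carrier G") (auto simp: zind_def cf_def)
    qed
    thus "zind G {\<one>} \<in> twoway_module G S" by (auto simp: A_char)
    have "(\<lambda>g. 0::int) = cf (\<lambda>k. 0)" by (auto simp: cf_def)
    thus "(\<lambda>g. 0::int) \<in> twoway_module G S" by (auto simp: A_char)
    fix f h assume f: "f \<in> twoway_module G S" and h: "h \<in> twoway_module G S"
    then obtain F H where fF: "f = cf F" and hH: "h = cf H" by (auto simp: A_char)
    have "(\<lambda>g. f g + h g) = cf (\<lambda>k. F k + H k)" by (auto simp: fF hH cf_def)
    thus "(\<lambda>g. f g + h g) \<in> twoway_module G S" by (auto simp: A_char)
    have "(\<lambda>g. - f g) = cf (\<lambda>k. - F k)" by (auto simp: fF cf_def)
    thus "(\<lambda>g. - f g) \<in> twoway_module G S" by (auto simp: A_char)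
    show "zmult G f h \<in> twoway_module G S" using zmult_cf by (auto simp: A_char fF hH)
  qed
  have P1: "\<forall>X\<in>NN ` TT. X \<noteq> {}" using T_iff by (force simp: N_mem)
  have P2: "\<forall>X\<in>NN ` TT. \<forall>Y\<in>NN ` TT. X \<noteq> Y \<longrightarrow> X \<inter> Y = {}" by (auto simp: N_mem)
  have P3: "\<Union>(NN ` TT) = carrier G" using td_T by (auto simp: N_mem)
  have P4: "{\<one>} \<in> NN ` TT" using N00 T00 by force
  have P5: "\<forall>X\<in>NN ` TT. (\<lambda>x. inv x) ` X \<in> NN ` TT" using inv_N swap_T by auto
  have P6: "twoway_module G S = zspan (zind G ` NN ` TT)"
    by (simp add: twoway_module_def image_image)
  have P7: "zindependent (zind G ` NN ` TT)"
    unfolding zindependent_def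
  proof (intro allI impI ballI)
    fix c b assume h: "\<forall>g. (\<Sum>b\<in>zind G ` NN ` TT. c b * b g) = 0" and b: "b \<in> zind G ` NN ` TT"
    then obtain i where i: "i \<in> TT" and bi: "b = zind G (NN i)" by auto
    obtain g where g: "g \<in> carrier G" "td \<one> g = i" using i T_iff by blast
    have "(\<Sum>b\<in>(\<lambda>i. zind G (NN i)) ` TT. c b * b g) = 0" using h by (simp add: image_image)
    thus "c b = 0" using g bi by (simp add: sum_at)
  qed
  show ?thesis unfolding is_Sring_def using zs P1 P2 P3 P4 P5 P6 P7 by blast
qed

lemma sub_cell:
  assumes "zind G H \<in> twoway_module G S" "a \<in> H" "b \<in> carrier G" "td \<one> a = td \<one> b" "H \<subseteq> carrier G"
  shows "b \<in> H"
proof -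
  obtain F where F: "zind G H = cf F" using assms(1) by (auto simp: A_char)
  have "zind G H a = 1" using assms by (auto simp: zind_def)
  hence "F (td \<one> b) = 1" using assms by (simp add: F cf_def subsetD)
  hence "zind G H b = 1" using assms by (simp add: F cf_def)
  thus ?thesis by (simp add: zind_def split: if_splits)
qed

lemma Rs_mem_eq: "R \<in> Rs \<Longrightarrow> (x,y) \<in> R \<Longrightarrow> x' \<in> carrier G \<Longrightarrow> y' \<in> carrier G \<Longrightarrow>
   td x' y' = td x y \<Longrightarrow> (x',y') \<in> R"
  by (auto simp: Rs_eq dr_mem)

lemma Rs_disj: "R \<in> Rs \<Longrightarrow> R' \<in> Rs \<Longrightarrow> (x,y) \<in> R \<Longrightarrow> (x,y) \<in> R' \<Longrightarrow> R = R'"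
  by (auto simp: Rs_eq dr_mem)

lemma Rs_sub: "R \<in> Rs \<Longrightarrow> (x,y) \<in> R \<Longrightarrow> x \<in> carrier G \<and> y \<in> carrier G"
  by (auto simp: Rs_eq dr_mem)

lemma Rs_ne: "R \<in> Rs \<Longrightarrow> \<exists>x y. (x,y) \<in> R"
proof -
  assume "R \<in> Rs"
  then obtain k where k: "k \<in> TT" "R = dist_rel (carrier G) EE k" by (auto simp: Rs_eq)
  from k(1) obtain g where g: "g \<in> carrier G" "td \<one> g = k" unfolding T_iff by blast
  have "(\<one>, g) \<in> R" using k(2) g by (simp add: dr_mem)
  thus ?thesis by blast
qed

lemma Id_eq: "dist_rel (carrier G) EE (0,0) = Id_on (carrier G)"
proof -
  have "(x,y) \<in> dist_rel (carrier G) EE (0,0) \<longleftrightarrow> (x,y) \<in> Id_on (carrier G)" for x y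
  proof -
    have "x \<in> carrier G \<Longrightarrow> y \<in> carrier G \<Longrightarrow> td x y = (0,0) \<Longrightarrow> x = y"
      using td_zero[of x y] by simp
    thus ?thesis using td_refl[of x] by (auto simp: dr_mem)
  qed
  thus ?thesis by auto
qed

lemma grp_eq: "x \<in> carrier G \<Longrightarrow> y \<in> carrier G \<Longrightarrow> z \<in> carrier G \<Longrightarrow>
   (y \<otimes> inv z) \<otimes> inv (x \<otimes> inv z) = y \<otimes> inv x"
  by (simp add: inv_mult_group m_assoc[symmetric]) (simp add: m_assoc)

lemma prim_A:
  assumes ps: "primitive_scheme (carrier G) Rs"
  shows "primitive_Sring G (twoway_module G S)"
  unfolding primitive_Sring_def
proof (intro conjI allI impI is_sring)
  fix H assume "Sring_subgroup G (twoway_module G S) H"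
  hence sg: "subgroup H G" and zH: "zind G H \<in> twoway_module G S" by (auto simp: Sring_subgroup_def)
  have HV: "H \<subseteq> carrier G" using sg by (rule subgroup.subset)
  have oneH: "\<one> \<in> H" using sg by (rule subgroup.one_closed)
  show "H = {\<one>} \<or> H = carrier G"
  proof (cases "H = {\<one>}")
    case True thus ?thesis by simp
  next
    case False
    then obtain g where gH: "g \<in> H" and g1: "g \<noteq> \<one>" using oneH by blast
    have gV: "g \<in> carrier G" using gH HV by blast
    define R where "R = dist_rel (carrier G) EE (td \<one> g)"
    have RRs: "R \<in> Rs" using gV td_T by (auto simp: R_def Rs_eq)
    have 1: "(\<one>, g) \<in> R" using gV by (simp add: R_def dr_mem)
    have "R \<noteq> Id_on (carrier G)" using 1 g1 by auto
    hence hull: "closed_hull (carrier G) Rs R = Rs" using ps RRs by (simp add: primitive_scheme_def)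
    define Fc where "Fc = {R' \<in> Rs. \<forall>(x,y)\<in>R'. y \<otimes> inv x \<in> H}"
    have cell: "\<And>R' x y x' y'. R' \<in> Rs \<Longrightarrow> (x,y) \<in> R' \<Longrightarrow> (x',y') \<in> R' \<Longrightarrow> y \<otimes> inv x \<in> H \<Longrightarrow>
        y' \<otimes> inv x' \<in> H"
    proof -
      fix R' x y x' y' assume a: "R' \<in> Rs" "(x,y) \<in> R'" "(x',y') \<in> R'" "y \<otimes> inv x \<in> H"
      have xy: "x \<in> carrier G" "y \<in> carrier G" "x' \<in> carrier G" "y' \<in> carrier G"
        using a Rs_sub by blast+
      have "td x y = td x' y'" using a by (auto simp: Rs_eq dr_mem)
      hence "td \<one> (y \<otimes> inv x) = td \<one> (y' \<otimes> inv x')" using xy td_base[of x y] td_base[of x' y'] by simp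
      thus "y' \<otimes> inv x' \<in> H" using sub_cell[OF zH a(4) _ _ HV] xy by simp
    qed
    have cl: "closed_set (carrier G) Rs Fc"
      unfolding closed_set_def rel_prod_def
    proof (intro ballI subsetI)
      fix Ri Rj Rl assume Ri: "Ri \<in> Fc" and Rj: "Rj \<in> Fc"
        and Rl: "Rl \<in> {Rl \<in> Rs. \<exists>(x, y)\<in>Rl. inter_num (carrier G) (converse Ri) Rj x y \<noteq> 0}"
      then obtain x y where RlRs: "Rl \<in> Rs" and xy: "(x,y) \<in> Rl"
        and nz: "inter_num (carrier G) (converse Ri) Rj x y \<noteq> 0" by auto
      from nz obtain z where z: "z \<in> carrier G" "(z,x) \<in> Ri" "(z,y) \<in> Rj"
        unfolding inter_num_def by (metis (no_types, lifting) card.empty converse_iff empty_Collect_eq)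
      have xyV: "x \<in> carrier G" "y \<in> carrier G" using xy RlRs Rs_sub by blast+
      have "x \<otimes> inv z \<in> H" "y \<otimes> inv z \<in> H" using Ri Rj z by (auto simp: Fc_def)
      hence "(y \<otimes> inv z) \<otimes> inv (x \<otimes> inv z) \<in> H" using sg
        by (meson subgroup.m_closed subgroup.m_inv_closed)
      hence yx: "y \<otimes> inv x \<in> H" using grp_eq z xyV by simp
      show "Rl \<in> Fc" unfolding Fc_def using RlRs cell[OF RlRs xy _ yx] by auto
    qed
    have RFc: "R \<in> Fc" unfolding Fc_def using RRs cell[OF RRs 1] gV gH by auto
    have "closed_hull (carrier G) Rs R \<subseteq> Fc"
      unfolding closed_hull_def using cl RFc by (intro Inter_lower) (auto simp: Fc_def)
    hence RsFc: "Rs \<subseteq> Fc" using hull by simp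
    have "carrier G \<subseteq> H"
    proof
      fix y assume y: "y \<in> carrier G"
      have "dist_rel (carrier G) EE (td \<one> y) \<in> Rs" using y td_T by (auto simp: Rs_eq)
      hence "dist_rel (carrier G) EE (td \<one> y) \<in> Fc" using RsFc by blast
      moreover have "(\<one>, y) \<in> dist_rel (carrier G) EE (td \<one> y)" using y by (simp add: dr_mem)
      ultimately show "y \<in> H" using y by (auto simp: Fc_def)
    qed
    thus ?thesis using HV by blast
  qed
qed

lemma prim_B:
  assumes ps: "primitive_Sring G (twoway_module G S)"
  shows "primitive_scheme (carrier G) Rs"
  unfolding primitive_scheme_def
proof (intro ballI impI)
  fix R assume RRs: "R \<in> Rs" and RId: "R \<noteq> Id_on (carrier G)"
  define C where "C = closed_hull (carrier G) Rs R"
  have Rscl: "closed_set (carrier G) Rs Rs" by (auto simp: closed_set_def rel_prod_def)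
  have "Rs \<in> {F. F \<subseteq> Rs \<and> closed_set (carrier G) Rs F \<and> R \<in> F}" using Rscl RRs by blast
  hence CRs: "C \<subseteq> Rs" unfolding C_def closed_hull_def by (rule Inter_lower)
  have RC: "R \<in> C" unfolding C_def closed_hull_def by (rule InterI) simp
  have Ccl: "rel_prod (carrier G) Rs (converse Ri) Rj \<subseteq> C" if "Ri \<in> C" "Rj \<in> C" for Ri Rj
  proof
    fix Rl assume Rl: "Rl \<in> rel_prod (carrier G) Rs (converse Ri) Rj"
    show "Rl \<in> C" unfolding C_def closed_hull_def
    proof (rule InterI)
      fix F assume F: "F \<in> {F. F \<subseteq> Rs \<and> closed_set (carrier G) Rs F \<and> R \<in> F}"
      have "Ri \<in> F" using that(1) F unfolding C_def closed_hull_def by (rule InterD)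
      moreover have "Rj \<in> F" using that(2) F unfolding C_def closed_hull_def by (rule InterD)
      moreover have "closed_set (carrier G) Rs F" using F by simp
      ultimately show "Rl \<in> F" using Rl unfolding closed_set_def by blast
    qed
  qed
  define U where "U x y \<longleftrightarrow> (\<exists>R'\<in>C. (x,y) \<in> R')" for x y
  have UV: "x \<in> carrier G \<and> y \<in> carrier G" if "U x y" for x y
    using that CRs Rs_sub by (auto simp: U_def)
  have comp: "U x y" if "Ri \<in> C" "Rj \<in> C" "(z,x) \<in> Ri" "(z,y) \<in> Rj" for Ri Rj x y z
  proof -
    have v: "x \<in> carrier G" "y \<in> carrier G" "z \<in> carrier G"
      using that CRs Rs_sub by blast+
    define Rl where "Rl = dist_rel (carrier G) EE (td x y)"
    have RlRs: "Rl \<in> Rs" using v td_T by (auto simp: Rl_def Rs_eq)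
    have xy: "(x,y) \<in> Rl" using v by (simp add: Rl_def dr_mem)
    have ne: "{w \<in> carrier G. (x, w) \<in> converse Ri \<and> (w, y) \<in> Rj} \<noteq> {}" using that v by blast
    have fs: "finite {w \<in> carrier G. (x, w) \<in> converse Ri \<and> (w, y) \<in> Rj}" using fin by simp
    have "card {w \<in> carrier G. (x, w) \<in> converse Ri \<and> (w, y) \<in> Rj} \<noteq> 0"
      using ne fs card_0_eq by blast
    hence "inter_num (carrier G) (converse Ri) Rj x y \<noteq> 0" unfolding inter_num_def .
    hence "Rl \<in> rel_prod (carrier G) Rs (converse Ri) Rj" using RlRs xy by (auto simp: rel_prod_def)
    hence "Rl \<in> C" using Ccl that by blast
    thus ?thesis using xy by (auto simp: U_def)
  qed
  obtain a b where ab: "(a,b) \<in> R" using Rs_ne RRs by blast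
  have Ubb: "U b b" using comp[OF RC RC ab ab] .
  have Urefl: "U x x" if "x \<in> carrier G" for x
  proof -
    obtain R' where R'C: "R' \<in> C" and bb: "(b,b) \<in> R'" using Ubb unfolding U_def by blast
    have R'Rs: "R' \<in> Rs" using R'C CRs by blast
    have tde: "td x x = td b b" by (simp only: td_refl)
    have "(x,x) \<in> R'" by (rule Rs_mem_eq[OF R'Rs bb that that tde])
    thus ?thesis using R'C unfolding U_def by blast
  qed
  have Usym: "U y x" if Uxy: "U x y" for x y
  proof -
    obtain Ri where Ri: "Ri \<in> C" "(x,y) \<in> Ri" using Uxy unfolding U_def by blast
    have "U x x" using Urefl UV[OF Uxy] by blast
    then obtain Rj where Rj: "Rj \<in> C" "(x,x) \<in> Rj" by (auto simp: U_def)
    show ?thesis using comp[OF Ri(1) Rj(1) Ri(2) Rj(2)] .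
  qed
  have Utrans: "U x y" if U1: "U x z" and U2: "U z y" for x y z
  proof -
    obtain Ri where Ri: "Ri \<in> C" "(z,x) \<in> Ri" using Usym[OF U1] unfolding U_def by blast
    obtain Rj where Rj: "Rj \<in> C" "(z,y) \<in> Rj" using U2 unfolding U_def by blast
    show ?thesis using comp[OF Ri(1) Rj(1) Ri(2) Rj(2)] .
  qed
  have shift: "U x y \<longleftrightarrow> U \<one> (y \<otimes> inv x)" if "x \<in> carrier G" "y \<in> carrier G" for x y
  proof
    assume "U x y"
    then obtain R' where R'C: "R' \<in> C" and xy: "(x,y) \<in> R'" unfolding U_def by blast
    have R'Rs: "R' \<in> Rs" using R'C CRs by blast
    have tde: "td \<one> (y \<otimes> inv x) = td x y" using td_base[OF that] by simp
    have "(\<one>, y \<otimes> inv x) \<in> R'" by (rule Rs_mem_eq[OF R'Rs xy one_closed m_closed[OF that(2) inv_closed[OF that(1)]] tde])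
    thus "U \<one> (y \<otimes> inv x)" using R'C unfolding U_def by blast
  next
    assume "U \<one> (y \<otimes> inv x)"
    then obtain R' where R'C: "R' \<in> C" and xy: "(\<one>, y \<otimes> inv x) \<in> R'" unfolding U_def by blast
    have R'Rs: "R' \<in> Rs" using R'C CRs by blast
    have tde: "td x y = td \<one> (y \<otimes> inv x)" using td_base[OF that] .
    have "(x, y) \<in> R'" by (rule Rs_mem_eq[OF R'Rs xy that tde])
    thus "U x y" using R'C unfolding U_def by blast
  qed
  define H where "H = {g \<in> carrier G. U \<one> g}"
  have sg: "subgroup H G"
  proof (rule subgroupI)
    show "H \<subseteq> carrier G" by (auto simp: H_def)
    show "H \<noteq> {}" using Urefl[of \<one>] by (auto simp: H_def)
    fix x assume "x \<in> H"
    hence x: "x \<in> carrier G" "U \<one> x" by (auto simp: H_def)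
    hence "U x \<one>" using Usym by blast
    hence "U \<one> (\<one> \<otimes> inv x)" using shift[of x \<one>] x by simp
    thus "inv x \<in> H" using x by (simp add: H_def)
  next
    fix x y assume "x \<in> H" "y \<in> H"
    hence x: "x \<in> carrier G" "U \<one> x" and y: "y \<in> carrier G" "U \<one> y" by (auto simp: H_def)
    have "(x \<otimes> y) \<otimes> inv y = x" using x y by (simp add: m_assoc)
    hence "U y (x \<otimes> y)" using shift[of y "x \<otimes> y"] x y by simp
    hence "U \<one> (x \<otimes> y)" by (rule Utrans[OF y(2)])
    thus "x \<otimes> y \<in> H" using x y by (simp add: H_def)
  qed
  have "zind G H = cf (\<lambda>k. if \<exists>g\<in>H. td \<one> g = k then 1 else 0)"
  proof
    fix g show "zind G H g = cf (\<lambda>k. if \<exists>g\<in>H. td \<one> g = k then 1 else 0) g"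
    proof (cases "g \<in> carrier G")
      case True
      have "g \<in> H \<longleftrightarrow> (\<exists>g'\<in>H. td \<one> g' = td \<one> g)"
      proof
        assume "\<exists>g'\<in>H. td \<one> g' = td \<one> g"
        then obtain g' where g': "g' \<in> H" "td \<one> g' = td \<one> g" by blast
        then obtain R' where R'C: "R' \<in> C" and xy: "(\<one>, g') \<in> R'" unfolding H_def U_def by blast
        have R'Rs: "R' \<in> Rs" using R'C CRs by blast
        have tde: "td \<one> g = td \<one> g'" using g'(2) by simp
        have "(\<one>, g) \<in> R'" by (rule Rs_mem_eq[OF R'Rs xy one_closed True tde])
        thus "g \<in> H" using True R'C unfolding H_def U_def by blast
      qed blast
      thus ?thesis using True by (auto simp: zind_def cf_def)
    next
      case False thus ?thesis by (simp add: zind_def cf_def)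
    qed
  qed
  hence zH: "zind G H \<in> twoway_module G S" by (auto simp: A_char)
  have HH: "H = {\<one>} \<or> H = carrier G"
    using ps sg zH by (simp add: primitive_Sring_def Sring_subgroup_def)
  obtain k where k: "k \<in> TT" "R = dist_rel (carrier G) EE k" using RRs by (auto simp: Rs_eq)
  from k(1) obtain g where g: "g \<in> carrier G" "td \<one> g = k" unfolding T_iff by blast
  have "(\<one>, g) \<in> R" using g k by (simp add: dr_mem)
  hence gH: "g \<in> H" using RC g by (auto simp: H_def U_def)
  have "g \<noteq> \<one>" using RId k g td_refl Id_eq by auto
  hence HV: "H = carrier G" using HH gH by blast
  have "Rs \<subseteq> C"
  proof
    fix R' assume R': "R' \<in> Rs"
    obtain x y where xy: "(x,y) \<in> R'" using Rs_ne R' by blast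
    have v: "x \<in> carrier G" "y \<in> carrier G" using Rs_sub R' xy by blast+
    have "U \<one> (y \<otimes> inv x)" using HV v by (auto simp: H_def)
    hence "U x y" using shift v by blast
    then obtain R'' where "R'' \<in> C" "(x,y) \<in> R''" by (auto simp: U_def)
    moreover have "R'' = R'" using calculation CRs R' xy Rs_disj by blast
    ultimately show "R' \<in> C" by simp
  qed
  thus "closed_hull (carrier G) Rs R = Rs" using CRs by (simp add: C_def)
qed

end

theorem proposition4p3:
  fixes G :: "('a, 'b) monoid_scheme" and S :: "'a set"
  assumes "group G" and "finite (carrier G)"
    and "S \<subseteq> carrier G - {\<one>\<^bsub>G\<^esub>}"
    and "weakly_distance_regular (carrier G) (cay_arcs G S)"
  shows "primitive_Sring G (twoway_module G S) \<longleftrightarrow>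
         primitive_digraph (carrier G) (cay_arcs G S)"
proof -
  interpret wc G S using assms by (simp add: wc_def wc_axioms_def)
  show ?thesis using prim_A prim_B by (auto simp: primitive_digraph_def)
qed

end
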